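(* For all integers $m,k,p\ge 0$, \begin{align*} &(-1)^{m+1}\sum_{i=0}^{m}\frac{(\ln 2)^i}{i!}\zeta(\bar 1,\{1\}_{m-i},p+3,\{1\}_k)+(-1)^{p+k+1}\sum_{i=0}^{k}\frac{(\ln 2)^i}{i!}\zeta(\bar 1,\{1\}_{k-i},p+3,\{1\}_m)\\ &=\frac{(-1)^m}{(m+1)!}(\ln 2)^{m+1}\zeta(\overline{p+3},\{1\}_k)+\frac{(-1)^{p+k}}{(k+1)!}(\ln 2)^{k+1}\zeta(\overline{p+3},\{1\}_m)\\ &\quad+\sum_{i=0}^{p}(-1)^i\zeta(\overline{2+i},\{1\}_m)\,\zeta(\overline{p+2-i},\{1\}_k). \end{align*}
   Context: For nonzero integers $s_1,\dots,s_k$, with $\operatorname{sgn}(s)=1$ if $s>0$ and $-1$ if $s<0$, the multiple zeta value is $\zeta(s_1,\dots,s_k)=\sum_{n_1>n_2>\cdots>n_k\ge 1}\prod_{j=1}^k n_j^{-|s_j|}\operatorname{sgn}(s_j)^{n_j}$. A barred entry $\bar q$ (e.g. $\bar 1$, $\overline{p+3}$) denotes the negative entry $-q$. The notation $\{1\}_d$ means the entry $1$ repeated $d$ times ($d=0$ means no entries). *)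

theory Defs
  imports Complex_Main
begin

text \<open>Truncated multiple zeta sum over N \<ge> n1 > n2 > ... > nk \<ge> 1 for signed
  (nonzero integer) entries: entry s contributes sgn(s)^n / n^|s|.\<close>
fun mzv_trunc :: "int list \<Rightarrow> nat \<Rightarrow> real" where
  "mzv_trunc [] N = 1"
| "mzv_trunc (s # ss) N =
     (\<Sum>n = 1..N. (of_int (sgn s)) ^ n / (real n) ^ (nat \<bar>s\<bar>) * mzv_trunc ss (n - 1))"

definition mzv :: "int list \<Rightarrow> real" where
  "mzv s = lim (\<lambda>N. mzv_trunc s N)"

end

theory Submission
  imports Defs "HOL-Analysis.Analysis"
begin


definition posl :: "int list \<Rightarrow> bool" where "posl ss = (\<forall>x\<in>set ss. x > 0)"

lemma mzv_trunc_0: "mzv_trunc ss 0 = (if ss = [] then 1 else 0)"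
  by (cases ss) auto

lemma mzv_trunc_Suc: "mzv_trunc (s # ss) (Suc n) = mzv_trunc (s # ss) n
   + (of_int (sgn s)) ^ Suc n / (real (Suc n)) ^ (nat \<bar>s\<bar>) * mzv_trunc ss n"
  by (simp add: sum.cl_ivl_Suc)

lemma mzv_trunc_nonneg: "posl ss \<Longrightarrow> 0 \<le> mzv_trunc ss n"
proof (induction ss arbitrary: n)
  case Nil then show ?case by simp
next
  case (Cons x ss)
  then have "x > 0" "posl ss" by (auto simp: posl_def)
  then show ?case using Cons.IH by (auto intro!: sum_nonneg)
qed

lemma mzv_trunc_mono: "posl ss \<Longrightarrow> mzv_trunc ss n \<le> mzv_trunc ss (Suc n)"
proof (cases ss)
  case Nil then show ?thesis by simp
next
  case (Cons x r)
  assume "posl ss"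
  then have "x > 0" "posl r" using Cons by (auto simp: posl_def)
  then show ?thesis using Cons mzv_trunc_nonneg[of r n] by (simp add: mzv_trunc_Suc)
qed

lemma mzv_trunc_mono': assumes "posl ss" "m \<le> n" shows "mzv_trunc ss m \<le> mzv_trunc ss n"
  using assms(2) by (induction n rule: dec_induct) (auto intro: order_trans mzv_trunc_mono[OF assms(1)])

lemma harm_ge1: "n \<ge> 1 \<Longrightarrow> (1::real) \<le> harm n"
proof -
  assume "n \<ge> 1"
  then have "harm 1 \<le> (harm n :: real)" by (rule harm_mono)
  then show ?thesis by (simp add: harm_def)
qed

lemma mzv_trunc_bound: "posl ss \<Longrightarrow> mzv_trunc ss n \<le> harm n ^ length ss"
proof (induction ss arbitrary: n)
  case Nil then show ?case by simp
next
  case (Cons x ss)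
  then have x: "x > 0" and p: "posl ss" by (auto simp: posl_def)
  have "mzv_trunc (x # ss) n = (\<Sum>i = 1..n. 1 / real i ^ nat x * mzv_trunc ss (i - 1))"
    using x by simp
  also have "\<dots> \<le> (\<Sum>i = 1..n. inverse (real i) * harm n ^ length ss)"
  proof (rule sum_mono)
    fix i assume i: "i \<in> {1..n}"
    have a: "1 / real i ^ nat x \<le> inverse (real i)"
    proof -
      have "real i \<le> real i ^ nat x" using i x
        by (intro self_le_power) auto
      then show ?thesis using i by (simp add: divide_simps)
    qed
    have b: "mzv_trunc ss (i - 1) \<le> harm n ^ length ss"
    proof -
      have "mzv_trunc ss (i - 1) \<le> harm (i - 1) ^ length ss" using Cons.IH p by blast
      also have "\<dots> \<le> harm n ^ length ss"
        by (intro power_mono harm_mono harm_nonneg) (use i in auto)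
      finally show ?thesis .
    qed
    show "1 / real i ^ nat x * mzv_trunc ss (i - 1) \<le> inverse (real i) * harm n ^ length ss"
      using a b mzv_trunc_nonneg[OF p] i by (intro mult_mono) auto
  qed
  also have "\<dots> = harm n ^ length (x # ss)"
    by (simp add: harm_def sum_distrib_right)
  finally show ?case .
qed

lemma mzv_trunc_incr: "posl ss \<Longrightarrow> mzv_trunc ss (Suc n) - mzv_trunc ss n \<le> harm (Suc n) ^ length ss / real (Suc n)"
proof (cases ss)
  case Nil then show ?thesis by simp
next
  case (Cons x r)
  assume ps: "posl ss"
  then have x: "x > 0" and p: "posl r" using Cons by (auto simp: posl_def)
  have "mzv_trunc ss (Suc n) - mzv_trunc ss n = 1 / real (Suc n) ^ nat x * mzv_trunc r n"
    using Cons x by (simp add: mzv_trunc_Suc)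
  also have "\<dots> \<le> inverse (real (Suc n)) * harm (Suc n) ^ length ss"
  proof (rule mult_mono)
    have "real (Suc n) \<le> real (Suc n) ^ nat x" using x
      by (intro self_le_power) auto
    then show "1 / real (Suc n) ^ nat x \<le> inverse (real (Suc n))" by (simp add: divide_simps)
    have "mzv_trunc r n \<le> harm n ^ length r" using mzv_trunc_bound[OF p] .
    also have "\<dots> \<le> harm (Suc n) ^ length r" by (intro power_mono harm_mono harm_nonneg) auto
    also have "\<dots> \<le> harm (Suc n) ^ length ss" using Cons harm_ge1[of "Suc n"]
      by (intro power_increasing) auto
    finally show "mzv_trunc r n \<le> harm (Suc n) ^ length ss" .
  qed (use mzv_trunc_nonneg[OF p] in auto)
  finally show ?thesis by (simp add: divide_simps)
qed



lemma harm_le_ln: "n \<ge> 1 \<Longrightarrow> (harm n :: real) \<le> ln (real n) + 1"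
  using euler_mascheroni_sequence_decreasing[of 1 n] by (simp add: harm_def)

lemma harm_pow_bound: "\<exists>C>0. \<forall>n\<ge>1. (harm n :: real) ^ r \<le> C * real n powr (1/2)"
proof (cases "r = 0")
  case True
  then show ?thesis by (intro exI[of _ 1]) (auto intro: ge_one_powr_ge_zero)
next
  case False
  define e where "e = 1 / (2 * real r)"
  have e: "e > 0" using False by (simp add: e_def)
  show ?thesis
  proof (intro exI[of _ "(1 + 2 * real r) ^ r"] conjI allI impI)
    show "(1 + 2 * real r) ^ r > 0" by simp
    fix n :: nat assume n: "n \<ge> 1"
    have ne1: "real n powr e \<ge> 1" using n e by (intro ge_one_powr_ge_zero) auto
    have "e * ln (real n) = ln (real n powr e)" using n by (simp add: ln_powr)
    also have "\<dots> \<le> real n powr e - 1" using n by (intro ln_le_minus_one) auto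
    finally have "ln (real n) \<le> (real n powr e) / e" using e by (simp add: field_simps)
    also have "\<dots> = 2 * real r * real n powr e" by (simp add: e_def)
    finally have "harm n \<le> 1 + 2 * real r * real n powr e" using harm_le_ln[OF n] by simp
    also have "\<dots> \<le> (1 + 2 * real r) * real n powr e" using ne1 by (simp add: algebra_simps)
    finally have h: "harm n \<le> (1 + 2 * real r) * real n powr e" .
    have "harm n ^ r \<le> ((1 + 2 * real r) * real n powr e) ^ r"
      by (intro power_mono h harm_nonneg)
    also have "\<dots> = (1 + 2 * real r) ^ r * real n powr (e * real r)"
      using n by (simp add: power_mult_distrib powr_realpow[symmetric] powr_powr)
    also have "e * real r = 1/2" using False by (simp add: e_def)
    finally show "harm n ^ r \<le> (1 + 2 * real r) ^ r * real n powr (1/2)" .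
  qed
qed

lemma alt_summable:
  fixes u :: "nat \<Rightarrow> real"
  assumes lim: "u \<longlonglongrightarrow> 0" and var: "summable (\<lambda>n. \<bar>u (Suc n) - u n\<bar>)"
  shows "summable (\<lambda>n. (-1) ^ n * u n)"
proof -
  define a where "a n = (-1) ^ n * u n" for n
  have "a \<longlonglongrightarrow> 0"
  proof -
    have "(\<lambda>n. \<bar>a n\<bar>) = (\<lambda>n. \<bar>u n\<bar>)" by (auto simp: a_def abs_mult)
    moreover have "(\<lambda>n. \<bar>u n\<bar>) \<longlonglongrightarrow> 0" using tendsto_rabs[OF lim] by simp
    ultimately show ?thesis by (metis tendsto_rabs_zero_iff)
  qed
  then have s1: "summable (\<lambda>n. a (Suc n) - a n)" by (rule telescope_summable)
  have s2: "summable (\<lambda>n. (-1) ^ n * (u (Suc n) - u n))"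
    by (rule summable_rabs_cancel) (use var in \<open>simp add: abs_mult\<close>)
  have S: "summable (\<lambda>n. - ((a (Suc n) - a n) + (-1) ^ n * (u (Suc n) - u n)) / 2)"
    using summable_add[OF s1 s2] by (intro summable_divide summable_minus)
  have E: "(\<lambda>n. - ((a (Suc n) - a n) + (-1) ^ n * (u (Suc n) - u n)) / 2) = (\<lambda>n. (-1) ^ n * u n)"
    by (auto simp: a_def field_simps)
  show ?thesis by (subst E[symmetric]) (rule S)
qed

lemma pow_diff_le: fixes x y :: real assumes "0 \<le> y" "y \<le> x" "x \<le> 1"
  shows "x ^ s - y ^ s \<le> real s * (x - y)"
proof (induction s)
  case 0 then show ?case by simp
next
  case (Suc s)
  have "x ^ Suc s - y ^ Suc s = x * (x ^ s - y ^ s) + y ^ s * (x - y)" by (simp add: algebra_simps)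
  also have "\<dots> \<le> 1 * (real s * (x - y)) + 1 * (x - y)"
  proof (intro add_mono mult_mono)
    show "x ^ s - y ^ s \<le> real s * (x - y)" by (rule Suc.IH)
    show "y ^ s \<le> 1" using assms by (intro power_le_one) auto
    show "0 \<le> x ^ s - y ^ s" using assms by (simp add: power_mono)
  qed (use assms in auto)
  finally show ?case by (simp add: algebra_simps)
qed

definition cf :: "nat \<Rightarrow> int list \<Rightarrow> nat \<Rightarrow> real" where
  "cf s ss n = (if n = 0 then 0 else (-1) ^ n / real n ^ s * mzv_trunc ss (n - 1))"

lemma cf_summable:
  assumes ps: "posl ss" and s: "s \<ge> 1"
  shows "summable (cf s ss)"
proof -
  define Y where "Y = mzv_trunc ss"
  define u where "u n = (if n = 0 then 0 else Y (n - 1) / real n ^ s)" for n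
  obtain C where C: "C > 0" "\<And>n. n \<ge> 1 \<Longrightarrow> (harm n :: real) ^ length ss \<le> C * real n powr (1/2)"
    using harm_pow_bound by blast
  have Y0: "\<And>n. 0 \<le> Y n" using mzv_trunc_nonneg[OF ps] by (simp add: Y_def)
  have YB: "Y (n - 1) \<le> C * real n powr (1/2)" if n: "n \<ge> 1" for n
  proof -
    have "Y (n - 1) \<le> harm (n - 1) ^ length ss" using mzv_trunc_bound[OF ps] by (simp add: Y_def)
    also have "\<dots> \<le> harm n ^ length ss" by (intro power_mono harm_mono harm_nonneg) auto
    also have "\<dots> \<le> C * real n powr (1/2)" using C n by auto
    finally show ?thesis .
  qed
  have pw_ge: "real n \<le> real n ^ s" if "n \<ge> 1" for n using that s by (intro self_le_power) auto
  have cf_eq: "cf s ss = (\<lambda>n. (-1) ^ n * u n)"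
    by (auto simp: cf_def u_def Y_def)
  have "u \<longlonglongrightarrow> 0"
  proof (rule tendsto_sandwich[where f = "\<lambda>n. 0" and h = "\<lambda>n. C * real n powr (-1/2)"])
    show "\<forall>\<^sub>F n in sequentially. 0 \<le> u n" using Y0 by (auto simp: u_def)
    show "\<forall>\<^sub>F n in sequentially. u n \<le> C * real n powr (-1/2)"
    proof (rule eventually_sequentiallyI[of 1])
      fix n :: nat assume n: "n \<ge> 1"
      have "u n = Y (n - 1) / real n ^ s" using n by (simp add: u_def)
      also have "\<dots> \<le> Y (n - 1) / real n" using n Y0 pw_ge[OF n] by (intro divide_left_mono) auto
      also have "\<dots> \<le> C * real n powr (1/2) / real n" using n YB[OF n] by (intro divide_right_mono) auto
      also have "\<dots> = C * real n powr (-1/2)"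
        using n by (simp add: powr_diff[symmetric] powr_minus_divide field_simps powr_add[symmetric] flip: powr_realpow)
      finally show "u n \<le> C * real n powr (-1/2)" .
    qed
    show "(\<lambda>n. 0) \<longlonglongrightarrow> (0::real)" by simp
    show "(\<lambda>n. C * real n powr (-1/2)) \<longlonglongrightarrow> 0"
      by (intro tendsto_mult_right_zero tendsto_neg_powr filterlim_real_sequentially) auto
  qed
  moreover have "summable (\<lambda>n. \<bar>u (Suc n) - u n\<bar>)"
  proof (rule summable_comparison_test'[where g = "\<lambda>n. (1 + real s) * C * real n powr (-3/2)" and N = 1])
    show "summable (\<lambda>n. (1 + real s) * C * real n powr (-3/2))"
      by (intro summable_mult) (simp add: summable_real_powr_iff)
    fix n :: nat assume n: "n \<ge> 1"
    define x where "x = 1 / real n"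
    define y where "y = 1 / real (Suc n)"
    have xy: "0 \<le> y" "y \<le> x" "x \<le> 1" using n by (auto simp: x_def y_def divide_simps)
    have d1: "Y n - Y (n - 1) \<le> C * real n powr (1/2) / real n"
    proof -
      have "Y n - Y (n - 1) \<le> harm n ^ length ss / real n"
        using mzv_trunc_incr[OF ps, of "n - 1"] n by (simp add: Y_def)
      also have "\<dots> \<le> C * real n powr (1/2) / real n" using C n by (intro divide_right_mono) auto
      finally show ?thesis .
    qed
    have dY: "0 \<le> Y n - Y (n - 1)" using mzv_trunc_mono[OF ps, of "n - 1"] n by (simp add: Y_def)
    have "u (Suc n) - u n = (Y n - Y (n - 1)) * y ^ s - Y (n - 1) * (x ^ s - y ^ s)"
      using n by (simp add: u_def x_def y_def power_one_over field_simps)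
    then have "\<bar>u (Suc n) - u n\<bar> \<le> (Y n - Y (n - 1)) * y ^ s + Y (n - 1) * (x ^ s - y ^ s)"
      using dY Y0[of "n - 1"] xy by (simp add: power_mono abs_le_iff)
    also have "\<dots> \<le> (C * real n powr (1/2) / real n) * y + (C * real n powr (1/2)) * (real s * (x - y))"
    proof (intro add_mono mult_mono)
      show "y ^ s \<le> y" using xy s by (intro power_decreasing[of 1 s y, simplified]) auto
      show "x ^ s - y ^ s \<le> real s * (x - y)" using xy by (rule pow_diff_le)
    qed (use d1 dY YB[OF n] xy C in \<open>auto simp: power_mono\<close>)
    also have "\<dots> = (1 + real s) * C * (real n powr (1/2) / (real n * real (Suc n)))"
      using n by (simp add: x_def y_def field_simps) (simp add: add_divide_distrib)
    also have "\<dots> \<le> (1 + real s) * C * real n powr (-3/2)"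
    proof (intro mult_left_mono)
      have "real n powr (1/2) / (real n * real (Suc n)) \<le> real n powr (1/2) / (real n * real n)"
        using n by (intro divide_left_mono mult_left_mono) auto
      also have "\<dots> = real n powr (-3/2)"
      proof -
        have "real n powr (-3/2) * (real n * real n) = real n powr (-3/2) * real n powr 2"
          using n by (simp add: powr_realpow[symmetric] power2_eq_square)
        also have "\<dots> = real n powr (1/2)" by (simp only: powr_add[symmetric]) simp
        finally show ?thesis using n by (simp add: field_simps)
      qed
      finally show "real n powr (1/2) / (real n * real (Suc n)) \<le> real n powr (-3/2)" .
    qed (use C in auto)
    finally show "norm \<bar>u (Suc n) - u n\<bar> \<le> (1 + real s) * C * real n powr (-3/2)" by simp
  qed
  ultimately show ?thesis unfolding cf_eq by (rule alt_summable)
qed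



lemma mzv_trunc_neg: assumes "s \<ge> 1"
  shows "mzv_trunc (- int s # ss) N = (\<Sum>n<Suc N. cf s ss n)"
proof -
  have "mzv_trunc (- int s # ss) N = (\<Sum>n = 1..N. cf s ss n)"
    using assms by (subst mzv_trunc.simps) (auto simp: cf_def intro!: sum.cong)
  also have "\<dots> = (\<Sum>n<Suc N. cf s ss n)"
  proof -
    have "(\<Sum>n<Suc N. cf s ss n) = (\<Sum>n\<in>insert 0 {1..N}. cf s ss n)"
      by (intro sum.cong) auto
    also have "\<dots> = (\<Sum>n = 1..N. cf s ss n)" by (simp add: cf_def)
    finally show ?thesis by simp
  qed
  finally show ?thesis .
qed

lemma cf_sums_mzv: assumes "posl ss" "s \<ge> 1"
  shows "cf s ss sums mzv (- int s # ss)"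
proof -
  have sm: "summable (cf s ss)" using cf_summable[OF assms] .
  have "(\<lambda>N. mzv_trunc (- int s # ss) N) \<longlonglongrightarrow> suminf (cf s ss)"
    unfolding mzv_trunc_neg[OF assms(2)]
    using summable_LIMSEQ'[OF sm] by (simp add: lessThan_Suc_atMost)
  then have "mzv (- int s # ss) = suminf (cf s ss)" unfolding mzv_def by (rule limI)
  then show ?thesis using sm by (simp add: summable_sums)
qed

lemma powser_times_x:
  fixes e :: "nat \<Rightarrow> real"
  assumes "summable (\<lambda>n. e n * t ^ n)"
  shows "t * (\<Sum>n. e n * t ^ n) = (\<Sum>n. (if n = 0 then 0 else e (n - 1)) * t ^ n)"
proof -
  have "(\<lambda>n. t * (e n * t ^ n)) sums (t * (\<Sum>n. e n * t ^ n))"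
    using sums_mult[OF summable_sums[OF assms]] .
  then have "(\<lambda>n. (\<lambda>n. (if n = 0 then 0 else e (n - 1)) * t ^ n) (Suc n)) sums (t * (\<Sum>n. e n * t ^ n))"
    by (simp add: algebra_simps)
  then have "(\<lambda>n. (if n = 0 then 0 else e (n - 1)) * t ^ n) sums (t * (\<Sum>n. e n * t ^ n) + 0)"
    by (subst (asm) sums_Suc_iff) simp
  then show ?thesis by (simp add: sums_iff)
qed

lemma abel_thm:
  fixes a :: "nat \<Rightarrow> real"
  assumes as: "a sums S"
  shows "((\<lambda>t. \<Sum>n. a n * t ^ n) \<longlongrightarrow> S) (at_left 1)"
proof -
  define D where "D n = (\<Sum>i<Suc n. a i) - S" for n
  have D0: "D \<longlonglongrightarrow> 0"
  proof -
    have "(\<lambda>n. \<Sum>i<Suc n. a i) \<longlonglongrightarrow> S" using as unfolding sums_def by (rule LIMSEQ_Suc)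
    then show ?thesis unfolding D_def using tendsto_diff[OF _ tendsto_const[of S]] by fastforce
  qed
  have sm1: "summable a" using as by (rule sums_summable)
  have key: "(\<Sum>n. a n * t ^ n) - S = (1 - t) * (\<Sum>n. D n * t ^ n)"
    and smD: "summable (\<lambda>n. \<bar>D n\<bar> * t ^ n)"
    if t: "0 \<le> t" "t < 1" for t
  proof -
    obtain B where B: "\<And>n. \<bar>D n\<bar> \<le> B"
      using convergent_imp_Bseq[OF convergentI[OF D0]] by (auto simp: Bseq_def)
    have geo: "summable (\<lambda>n. t ^ n)" using t by (intro summable_geometric) auto
    show smD: "summable (\<lambda>n. \<bar>D n\<bar> * t ^ n)"
      by (rule summable_comparison_test'[OF summable_mult[OF geo, of B], of 0])
         (use B t in \<open>auto intro!: mult_right_mono\<close>)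
    have smD': "summable (\<lambda>n. D n * t ^ n)"
      by (rule summable_rabs_cancel) (use smD t in \<open>simp add: abs_mult\<close>)
    have sma: "summable (\<lambda>n. a n * t ^ n)"
      using powser_inside[of a 1 t] sm1 t by simp
    have "(1 - t) * (\<Sum>n. D n * t ^ n) = (\<Sum>n. D n * t ^ n) - t * (\<Sum>n. D n * t ^ n)"
      by (simp add: algebra_simps)
    also have "\<dots> = (\<Sum>n. D n * t ^ n) - (\<Sum>n. (if n = 0 then 0 else D (n - 1)) * t ^ n)"
      by (simp add: powser_times_x[OF smD'])
    also have "\<dots> = (\<Sum>n. (D n - (if n = 0 then 0 else D (n - 1))) * t ^ n)"
    proof -
      have "summable (\<lambda>n. (if n = 0 then 0 else D (n - 1)) * t ^ n)"
      proof -
        have "summable (\<lambda>n. t * (D n * t ^ n))" using smD' by (rule summable_mult)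
        then have "summable (\<lambda>n. (\<lambda>n. (if n = 0 then 0 else D (n - 1)) * t ^ n) (Suc n))"
          by (simp add: algebra_simps)
        then show ?thesis by (subst (asm) summable_Suc_iff)
      qed
      then show ?thesis using smD' by (subst suminf_diff) (auto simp: algebra_simps)
    qed
    also have "\<dots> = (\<Sum>n. a n * t ^ n - (if n = 0 then S else 0))"
    proof (intro suminf_cong)
      fix n show "(D n - (if n = 0 then 0 else D (n - 1))) * t ^ n = a n * t ^ n - (if n = 0 then S else 0)"
        by (cases n) (auto simp: D_def)
    qed
    also have "\<dots> = (\<Sum>n. a n * t ^ n) - (\<Sum>n. (if n = 0 then S else 0))"
      by (rule suminf_diff[symmetric, OF sma], rule summable_finite[of "{0}"]) auto
    also have "(\<Sum>n. (if n = 0 then S else (0::real))) = S"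
      by (subst suminf_finite[of "{0}"]) auto
    finally show "(\<Sum>n. a n * t ^ n) - S = (1 - t) * (\<Sum>n. D n * t ^ n)" by simp
  qed
  show ?thesis
  proof (rule tendstoI)
    fix e :: real assume e: "e > 0"
    obtain N where N: "\<And>n. n \<ge> N \<Longrightarrow> \<bar>D n\<bar> < e / 2"
      using LIMSEQ_D[OF D0, of "e/2"] e by auto
    define B where "B = (\<Sum>n<N. \<bar>D n\<bar>)"
    have B0: "B \<ge> 0" by (simp add: B_def sum_nonneg)
    have bound: "\<bar>(\<Sum>n. a n * t ^ n) - S\<bar> \<le> (1 - t) * B + e / 2" if t: "0 \<le> t" "t < 1" for t
    proof -
      have geo: "summable (\<lambda>n. t ^ n)" using t by (intro summable_geometric) auto
      have "\<bar>(\<Sum>n. D n * t ^ n)\<bar> \<le> (\<Sum>n. \<bar>D n\<bar> * t ^ n)"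
        using summable_rabs[of "\<lambda>n. D n * t ^ n"] smD[OF t] t by (simp add: abs_mult)
      also have "\<dots> \<le> (\<Sum>n. (if n < N then \<bar>D n\<bar> else 0) + e / 2 * t ^ n)"
      proof (rule suminf_le)
        fix n show "\<bar>D n\<bar> * t ^ n \<le> (if n < N then \<bar>D n\<bar> else 0) + e / 2 * t ^ n"
        proof (cases "n < N")
          case True
          have "\<bar>D n\<bar> * t ^ n \<le> \<bar>D n\<bar> * 1" using t by (intro mult_left_mono power_le_one) auto
          moreover have "0 \<le> e * t ^ n / 2" using e t by simp
          ultimately show ?thesis using True by simp
        next
          case False
          then have "\<bar>D n\<bar> * t ^ n \<le> e / 2 * t ^ n" using N[of n] t by (intro mult_right_mono) auto
          then show ?thesis using False by simp
        qed
        show "summable (\<lambda>n. \<bar>D n\<bar> * t ^ n)" using smD[OF t] .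
        show "summable (\<lambda>n. (if n < N then \<bar>D n\<bar> else 0) + e / 2 * t ^ n)"
          by (intro summable_add summable_mult geo summable_finite[of "{..<N}"]) auto
      qed
      also have "\<dots> = B + e / 2 / (1 - t)"
      proof -
        have "(\<Sum>n. (if n < N then \<bar>D n\<bar> else 0) + e / 2 * t ^ n) =
              (\<Sum>n. (if n < N then \<bar>D n\<bar> else 0)) + (\<Sum>n. e / 2 * t ^ n)"
          by (rule suminf_add[symmetric], rule summable_finite[of "{..<N}"]) (use t in \<open>auto intro: summable_mult geo\<close>)
        also have "(\<Sum>n. (if n < N then \<bar>D n\<bar> else 0)) = B"
          by (subst suminf_finite[of "{..<N}"]) (auto simp: B_def)
        also have "(\<Sum>n. e / 2 * t ^ n) = e / 2 / (1 - t)"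
          using suminf_geometric[of t] t by (subst suminf_mult) (auto intro: geo)
        finally show ?thesis .
      qed
      finally have "\<bar>(\<Sum>n. D n * t ^ n)\<bar> \<le> B + e / 2 / (1 - t)" .
      then have "(1 - t) * \<bar>(\<Sum>n. D n * t ^ n)\<bar> \<le> (1 - t) * (B + e / 2 / (1 - t))"
        using t by (intro mult_left_mono) auto
      also have "\<dots> = (1 - t) * B + e / 2" using t by (simp add: field_simps)
      finally show ?thesis using key[OF t] t by (simp add: abs_mult)
    qed
    define d where "d = e / (2 * (B + 1))"
    have d: "d > 0" using e B0 by (simp add: d_def)
    have "eventually (\<lambda>t. t \<in> {max 0 (1 - d)<..<1}) (at_left (1::real))"
      using d by (intro eventually_at_left_real) auto
    then have "eventually (\<lambda>t. 1 - d < t \<and> t < 1 \<and> 0 \<le> t) (at_left (1::real))"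
      by eventually_elim auto
    then show "eventually (\<lambda>t. dist (\<Sum>n. a n * t ^ n) S < e) (at_left 1)"
    proof eventually_elim
      case (elim t)
      then have "\<bar>(\<Sum>n. a n * t ^ n) - S\<bar> \<le> (1 - t) * B + e / 2" using bound by auto
      also have "(1 - t) * B \<le> d * B" using elim B0 by (intro mult_right_mono) auto
      also have "d * B < e / 2" using e B0 by (simp add: d_def field_simps)
      finally show ?case by (simp add: dist_real_def)
    qed
  qed
qed



definition pw :: "nat \<Rightarrow> int list \<Rightarrow> real \<Rightarrow> real" where
  "pw s ss t = (\<Sum>n. cf s ss n * t ^ n)"

lemma pw_summable: assumes "posl ss" "s \<ge> 1" "\<bar>t\<bar> < 1"
  shows "summable (\<lambda>n. cf s ss n * t ^ n)"
  using powser_inside[of "cf s ss" 1 t] cf_summable[OF assms(1,2)] assms(3) by simp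

lemma diffs_summable: assumes "posl ss" "s \<ge> 1" "\<bar>t\<bar> < 1"
  shows "summable (\<lambda>n. diffs (cf s ss) n * t ^ n)"
  by (rule termdiff_converges[of t 1]) (use assms pw_summable[OF assms(1,2)] in auto)

lemma pw_deriv: assumes "posl ss" "s \<ge> 1" "\<bar>t\<bar> < 1"
  shows "(pw s ss has_field_derivative (\<Sum>n. diffs (cf s ss) n * t ^ n)) (at t)"
  unfolding pw_def[abs_def]
  by (rule termdiffs_strong[of _ 1]) (use cf_summable[OF assms(1,2)] assms(3) in auto)

lemma pw_isCont: assumes "posl ss" "s \<ge> 1" "\<bar>t\<bar> < 1"
  shows "isCont (pw s ss) t"
  using pw_deriv[OF assms] by (rule DERIV_isCont)

lemma pw_zero [simp]: "pw s ss 0 = 0"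
  by (simp add: pw_def cf_def)

lemma pw_tendsto: assumes "posl ss" "s \<ge> 1"
  shows "(pw s ss \<longlongrightarrow> mzv (- int s # ss)) (at_left 1)"
  unfolding pw_def[abs_def] by (rule abel_thm[OF cf_sums_mzv[OF assms]])

lemma powser_times_1px:
  fixes e :: "nat \<Rightarrow> real"
  assumes "summable (\<lambda>n. e n * t ^ n)"
  shows "(1 + t) * (\<Sum>n. e n * t ^ n) = (\<Sum>n. (e n + (if n = 0 then 0 else e (n - 1))) * t ^ n)"
proof -
  have s2: "summable (\<lambda>n. (if n = 0 then 0 else e (n - 1)) * t ^ n)"
  proof -
    have "summable (\<lambda>n. t * (e n * t ^ n))" using assms by (rule summable_mult)
    then have "summable (\<lambda>n. (\<lambda>n. (if n = 0 then 0 else e (n - 1)) * t ^ n) (Suc n))"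
      by (simp add: algebra_simps)
    then show ?thesis by (subst (asm) summable_Suc_iff)
  qed
  have "(1 + t) * (\<Sum>n. e n * t ^ n) = (\<Sum>n. e n * t ^ n) + t * (\<Sum>n. e n * t ^ n)"
    by (simp add: algebra_simps)
  also have "\<dots> = (\<Sum>n. e n * t ^ n) + (\<Sum>n. (if n = 0 then 0 else e (n - 1)) * t ^ n)"
    by (simp add: powser_times_x[OF assms])
  also have "\<dots> = (\<Sum>n. e n * t ^ n + (if n = 0 then 0 else e (n - 1)) * t ^ n)"
    by (rule suminf_add[OF assms s2])
  finally show ?thesis by (simp add: algebra_simps)
qed

lemma posl_Cons: "posl (x # xs) \<longleftrightarrow> x > 0 \<and> posl xs"
  by (simp add: posl_def)

lemma D1: assumes q: "q \<ge> 1" and pr: "posl rest" and t: "\<bar>t\<bar> < 1"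
  shows "(1 + t) * (\<Sum>n. diffs (cf 1 (int q # rest)) n * t ^ n) = - pw q rest t"
proof -
  have ps: "posl (int q # rest)" using q pr by (simp add: posl_Cons)
  have "(1 + t) * (\<Sum>n. diffs (cf 1 (int q # rest)) n * t ^ n)
     = (\<Sum>n. (diffs (cf 1 (int q # rest)) n + (if n = 0 then 0 else diffs (cf 1 (int q # rest)) (n - 1))) * t ^ n)"
    by (rule powser_times_1px[OF diffs_summable[OF ps _ t]]) simp
  also have "\<dots> = (\<Sum>n. (- cf q rest n) * t ^ n)"
  proof (intro suminf_cong)
    fix n :: nat
    have "diffs (cf 1 (int q # rest)) n + (if n = 0 then 0 else diffs (cf 1 (int q # rest)) (n - 1)) = - cf q rest n"
    proof (cases n)
      case 0
      then show ?thesis by (simp add: diffs_def cf_def mzv_trunc_0)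
    next
      case (Suc j)
      define Y where "Y = mzv_trunc (int q # rest)"
      have e: "diffs (cf 1 (int q # rest)) i = (-1) ^ Suc i * Y i" for i
        by (simp add: diffs_def cf_def Y_def del: mzv_trunc.simps)
      have Y: "Y (Suc j) = Y j + 1 / real (Suc j) ^ q * mzv_trunc rest j"
        using q unfolding Y_def by (simp add: mzv_trunc_Suc del: mzv_trunc.simps)
      show ?thesis unfolding e using Suc
        by (simp add: Y cf_def field_simps del: mzv_trunc.simps)
    qed
    then show "(diffs (cf 1 (int q # rest)) n + (if n = 0 then 0 else diffs (cf 1 (int q # rest)) (n - 1))) * t ^ n
       = - cf q rest n * t ^ n" by simp
  qed
  also have "\<dots> = - pw q rest t"
    unfolding pw_def using pw_summable[OF pr q t] by (simp add: suminf_minus)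
  finally show ?thesis .
qed

lemma D0: assumes t: "\<bar>t\<bar> < 1"
  shows "(1 + t) * (\<Sum>n. diffs (cf 1 []) n * t ^ n) = - 1"
proof -
  have ps: "posl []" by (simp add: posl_def)
  have "(1 + t) * (\<Sum>n. diffs (cf 1 []) n * t ^ n)
     = (\<Sum>n. (diffs (cf 1 []) n + (if n = 0 then 0 else diffs (cf 1 []) (n - 1))) * t ^ n)"
    by (rule powser_times_1px[OF diffs_summable[OF ps _ t]]) simp
  also have "\<dots> = (\<Sum>n. (if n = 0 then -1 else 0))"
  proof (intro suminf_cong)
    fix n :: nat
    show "(diffs (cf 1 []) n + (if n = 0 then 0 else diffs (cf 1 []) (n - 1))) * t ^ n = (if n = 0 then -1 else 0)"
      by (cases n) (auto simp: diffs_def cf_def)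
  qed
  also have "\<dots> = -1" by (subst suminf_finite[of "{0}"]) auto
  finally show ?thesis .
qed

lemma D2: assumes s: "s \<ge> 2" and pr: "posl ss" and t: "\<bar>t\<bar> < 1"
  shows "t * (\<Sum>n. diffs (cf s ss) n * t ^ n) = pw (s - 1) ss t"
proof -
  have "t * (\<Sum>n. diffs (cf s ss) n * t ^ n) = (\<Sum>n. (if n = 0 then 0 else diffs (cf s ss) (n - 1)) * t ^ n)"
    by (rule powser_times_x[OF diffs_summable[OF pr _ t]]) (use s in simp)
  also have "\<dots> = pw (s - 1) ss t"
    unfolding pw_def
  proof (intro suminf_cong)
    fix n :: nat
    show "(if n = 0 then 0 else diffs (cf s ss) (n - 1)) * t ^ n = cf (s - 1) ss n * t ^ n"
    proof (cases n)
      case (Suc j)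
      define x where "x = real (Suc j)"
      have x0: "x \<noteq> 0" by (simp add: x_def)
      have aux: "x * (a / x ^ s) = a / x ^ (s - 1)" for a
      proof -
        have "x ^ s = x * x ^ (s - 1)" using s by (cases s) auto
        then show ?thesis using x0 by (simp add: field_simps)
      qed
      have "diffs (cf s ss) j = x * ((-1) ^ Suc j / x ^ s * mzv_trunc ss j)"
        by (simp add: diffs_def cf_def x_def)
      also have "\<dots> = (-1) ^ Suc j / x ^ (s - 1) * mzv_trunc ss j"
        using aux[of "(-1) ^ Suc j * mzv_trunc ss j"] by (simp add: field_simps)
      also have "\<dots> = cf (s - 1) ss n" by (simp add: cf_def Suc x_def)
      finally show ?thesis using Suc by simp
    qed (simp add: cf_def)
  qed
  finally show ?thesis .
qed

lemma deriv_A: assumes q: "q \<ge> 1" and pr: "posl rest" and t: "\<bar>t\<bar> < 1"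
  shows "(pw 1 (int q # rest) has_field_derivative (- pw q rest t / (1 + t))) (at t)"
proof -
  have ps: "posl (int q # rest)" using q pr by (simp add: posl_Cons)
  have "(\<Sum>n. diffs (cf 1 (int q # rest)) n * t ^ n) = - pw q rest t / (1 + t)"
    using D1[OF q pr t] t by (simp add: field_simps)
  moreover have "(pw 1 (int q # rest) has_field_derivative (\<Sum>n. diffs (cf 1 (int q # rest)) n * t ^ n)) (at t)"
    by (rule pw_deriv[OF ps order_refl t])
  ultimately show ?thesis by (simp only:)
qed

lemma deriv_f0: assumes t: "\<bar>t\<bar> < 1"
  shows "(pw 1 [] has_field_derivative (- 1 / (1 + t))) (at t)"
proof -
  have ps: "posl []" by (simp add: posl_def)
  have "(\<Sum>n. diffs (cf 1 []) n * t ^ n) = - 1 / (1 + t)"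
    using D0[OF t] t by (simp add: field_simps)
  moreover have "(pw 1 [] has_field_derivative (\<Sum>n. diffs (cf 1 []) n * t ^ n)) (at t)"
    by (rule pw_deriv[OF ps order_refl t])
  ultimately show ?thesis by (simp only:)
qed

lemma deriv_M: assumes s: "s \<ge> 2" and pr: "posl ss" and t: "\<bar>t\<bar> < 1" "t \<noteq> 0"
  shows "(pw s ss has_field_derivative (pw (s - 1) ss t / t)) (at t)"
proof -
  have "(\<Sum>n. diffs (cf s ss) n * t ^ n) = pw (s - 1) ss t / t"
    using D2[OF s pr t(1)] t(2) by (simp add: field_simps)
  moreover have "(pw s ss has_field_derivative (\<Sum>n. diffs (cf s ss) n * t ^ n)) (at t)"
    by (rule pw_deriv[OF pr _ t(1)]) (use s in simp)
  ultimately show ?thesis by (simp only:)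
qed



lemma deriv_unique_on:
  fixes f g :: "real \<Rightarrow> real"
  assumes "\<And>x. x \<in> {-1<..<1} \<Longrightarrow> (f has_field_derivative d x) (at x)"
      and "\<And>x. x \<in> {-1<..<1} \<Longrightarrow> (g has_field_derivative d x) (at x)"
      and "f 0 = g 0" and "t \<in> {-1<..<1}"
  shows "f t = g t"
proof -
  have "\<exists>c. \<forall>x\<in>{-1<..<1}. (\<lambda>x. f x - g x) x = c"
  proof (rule has_field_derivative_zero_constant)
    fix x :: real assume x: "x \<in> {-1<..<1}"
    have "((\<lambda>x. f x - g x) has_field_derivative d x - d x) (at x)"
      by (intro DERIV_diff assms(1,2) x)
    then show "((\<lambda>x. f x - g x) has_field_derivative 0) (at x within {-1<..<1})"
      by (simp add: has_field_derivative_at_within)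
  qed auto
  then obtain c where c: "\<And>x. x \<in> {-1<..<1} \<Longrightarrow> f x - g x = c" by auto
  have "c = 0" using c[of 0] assms(3) by simp
  then show ?thesis using c[OF assms(4)] by simp
qed

lemma DERIV_pow_fact:
  fixes f :: "real \<Rightarrow> real"
  assumes "(f has_field_derivative f') (at x)"
  shows "((\<lambda>x. f x ^ Suc n / fact (Suc n)) has_field_derivative (f x ^ n / fact n * f')) (at x)"
proof -
  have "((\<lambda>x. f x ^ Suc n / fact (Suc n)) has_field_derivative ((1 + of_nat n) * (f' * f x ^ n)) / fact (Suc n)) (at x)"
    by (intro DERIV_cdivide DERIV_power_Suc assms)
  moreover have "(1 + of_nat n) * (f' * f x ^ n) / fact (Suc n) = f x ^ n / fact n * (f' :: real)"
  proof -
    have "fact (Suc n) = (1 + real n) * (fact n :: real)" by (simp add: fact_Suc)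
    then have "(1 + of_nat n) * (f' * f x ^ n) / fact (Suc n) = (1 + real n) * (f' * f x ^ n) / ((1 + real n) * fact n)"
      by simp
    also have "\<dots> = (f' * f x ^ n) / fact n"
      by (rule mult_divide_mult_cancel_left) (simp add: add_pos_nonneg)
    finally show ?thesis by simp
  qed
  ultimately show ?thesis by (simp add: mult.commute)
qed

lemma pw_ones: assumes t: "t \<in> {-1<..<1}"
  shows "pw 1 (replicate m 1) t = (- ln (1 + t)) ^ (Suc m) / fact (Suc m)"
  using t
proof (induction m arbitrary: t)
  case 0
  have "pw 1 [] t = (\<lambda>x. - ln (1 + x)) t"
  proof (rule deriv_unique_on[where d = "\<lambda>x. - 1 / (1 + x)" and g = "\<lambda>x. - ln (1 + x)"])
    fix x :: real assume x: "x \<in> {-1<..<1}"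
    show "(pw 1 [] has_field_derivative - 1 / (1 + x)) (at x)"
      using deriv_f0[of x] x by auto
    show "((\<lambda>x. - ln (1 + x)) has_field_derivative - 1 / (1 + x)) (at x)"
      using x by (auto intro!: derivative_eq_intros)
  qed (use 0 in auto)
  then show ?case by simp
next
  case (Suc m)
  have "pw 1 (int 1 # replicate m 1) t = (\<lambda>x. (- ln (1 + x)) ^ Suc (Suc m) / fact (Suc (Suc m))) t"
  proof (rule deriv_unique_on[where d = "\<lambda>x. - ((- ln (1 + x)) ^ Suc m / fact (Suc m)) / (1 + x)"
      and g = "\<lambda>x. (- ln (1 + x)) ^ Suc (Suc m) / fact (Suc (Suc m))"])
    fix x :: real assume x: "x \<in> {-1<..<1}"
    have "(pw 1 (int 1 # replicate m 1) has_field_derivative - pw 1 (replicate m 1) x / (1 + x)) (at x)"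
      using deriv_A[of 1 "replicate m 1" x] x by (auto simp: posl_def)
    then show "(pw 1 (int 1 # replicate m 1) has_field_derivative - ((- ln (1 + x)) ^ Suc m / fact (Suc m)) / (1 + x)) (at x)"
      using Suc.IH[OF x] by simp
    show "((\<lambda>x. (- ln (1 + x)) ^ Suc (Suc m) / fact (Suc (Suc m))) has_field_derivative
        - ((- ln (1 + x)) ^ Suc m / fact (Suc m)) / (1 + x)) (at x)"
    proof -
      have "((\<lambda>x. - ln (1 + x)) has_field_derivative - (1 / (1 + x))) (at x)"
        using x by (auto intro!: derivative_eq_intros)
      from DERIV_pow_fact[OF this, of "Suc m"] show ?thesis by simp
    qed
  qed (use Suc in auto)
  then show ?case by simp
qed

lemma tele_H:
  fixes a :: "nat \<Rightarrow> real \<Rightarrow> real"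
  assumes t: "t > -1"
    and da: "\<And>j. (a (Suc j) has_field_derivative (- a j t / (1 + t))) (at t)"
    and d0: "(a 0 has_field_derivative (- b / (1 + t))) (at t)"
  shows "((\<lambda>x. \<Sum>i = 0..m. ln (1 + x) ^ i / fact i * a (m - i) x) has_field_derivative
           (- (ln (1 + t) ^ m / fact m * b / (1 + t)))) (at t)"
  using da d0
proof (induction m arbitrary: a b)
  case 0
  then show ?case by simp
next
  case (Suc m)
  define a' where "a' j = a (Suc j)" for j
  have powaux: "real m * x ^ (m - Suc 0) * x = real m * x ^ m" for x :: real
    by (cases m) auto
  have IH: "((\<lambda>x. \<Sum>i = 0..m. ln (1 + x) ^ i / fact i * a' (m - i) x) has_field_derivative
           (- (ln (1 + t) ^ m / fact m * a 0 t / (1 + t)))) (at t)"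
    by (rule Suc.IH) (use Suc.prems in \<open>auto simp: a'_def\<close>)
  have eq: "(\<lambda>x. \<Sum>i = 0..Suc m. ln (1 + x) ^ i / fact i * a (Suc m - i) x)
     = (\<lambda>x. (\<Sum>i = 0..m. ln (1 + x) ^ i / fact i * a' (m - i) x) + ln (1 + x) ^ Suc m / fact (Suc m) * a 0 x)"
  proof
    fix x
    have "(\<Sum>i = 0..m. ln (1 + x) ^ i / fact i * a (Suc m - i) x) = (\<Sum>i = 0..m. ln (1 + x) ^ i / fact i * a' (m - i) x)"
      by (intro sum.cong) (auto simp: a'_def Suc_diff_le)
    then show "(\<Sum>i = 0..Suc m. ln (1 + x) ^ i / fact i * a (Suc m - i) x)
      = (\<Sum>i = 0..m. ln (1 + x) ^ i / fact i * a' (m - i) x) + ln (1 + x) ^ Suc m / fact (Suc m) * a 0 x"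
      by simp
  qed
  have dl: "((\<lambda>x. ln (1 + x)) has_field_derivative (1 / (1 + t))) (at t)"
    using t by (auto intro!: derivative_eq_intros)
  have d2: "((\<lambda>x. ln (1 + x) ^ Suc m / fact (Suc m) * a 0 x) has_field_derivative
      (ln (1 + t) ^ m / fact m * (1 / (1 + t)) * a 0 t
       + ln (1 + t) ^ Suc m / fact (Suc m) * (- b / (1 + t)))) (at t)"
    using DERIV_mult[OF DERIV_pow_fact[OF dl, of m] Suc.prems(2)] by (simp add: algebra_simps)
  have "- (ln (1 + t) ^ m / fact m * a 0 t / (1 + t)) + (ln (1 + t) ^ m / fact m * (1 / (1 + t)) * a 0 t
       + ln (1 + t) ^ Suc m / fact (Suc m) * (- b / (1 + t))) = - (ln (1 + t) ^ Suc m / fact (Suc m) * b / (1 + t))"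
    by simp
  then show ?case unfolding eq using DERIV_add[OF IH d2] by simp
qed

lemma tele_P:
  fixes u v :: "nat \<Rightarrow> real \<Rightarrow> real"
  assumes t: "t \<noteq> 0"
    and du: "\<And>s. s \<ge> 2 \<Longrightarrow> (u s has_field_derivative (u (s - 1) t / t)) (at t)"
    and dv: "\<And>s. s \<ge> 2 \<Longrightarrow> (v s has_field_derivative (v (s - 1) t / t)) (at t)"
  shows "((\<lambda>x. \<Sum>i = 0..p. (-1) ^ i * u (2 + i) x * v (p + 2 - i) x) has_field_derivative
           ((u 1 t * v (p + 2) t + (-1) ^ p * u (p + 2) t * v 1 t) / t)) (at t)"
proof -
  have d: "((\<lambda>x. \<Sum>i = 0..p. (-1) ^ i * u (2 + i) x * v (p + 2 - i) x) has_field_derivative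
     (\<Sum>i = 0..p. (-1) ^ i * (u (1 + i) t / t * v (p + 2 - i) t + u (2 + i) t * (v (p + 1 - i) t / t)))) (at t)"
  proof (rule DERIV_sum)
    fix i assume i: "i \<in> {0..p}"
    have a: "(u (2 + i) has_field_derivative (u (1 + i) t / t)) (at t)" using du[of "2 + i"] by simp
    have b: "(v (p + 2 - i) has_field_derivative (v (p + 1 - i) t / t)) (at t)"
      using dv[of "p + 2 - i"] i by (simp add: Suc_diff_le)
    show "((\<lambda>x. (-1) ^ i * u (2 + i) x * v (p + 2 - i) x) has_field_derivative
        (-1) ^ i * (u (1 + i) t / t * v (p + 2 - i) t + u (2 + i) t * (v (p + 1 - i) t / t))) (at t)"
      using DERIV_cmult[OF DERIV_mult[OF a b], of "(-1) ^ i"] by (simp add: ac_simps add_divide_distrib)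
  qed
  define w where "w i = (-1) ^ i * u (1 + i) t * v (p + 2 - i) t" for i
  have "(\<Sum>i = 0..p. (-1) ^ i * (u (1 + i) t / t * v (p + 2 - i) t + u (2 + i) t * (v (p + 1 - i) t / t)))
      = (\<Sum>i\<le>p. w i - w (Suc i)) / t"
    unfolding sum_divide_distrib atLeast0AtMost
  proof (intro sum.cong refl)
    fix i assume i: "i \<in> {..p}"
    have "p + 2 - Suc i = p + 1 - i" using i by auto
    then show "(-1) ^ i * (u (1 + i) t / t * v (p + 2 - i) t + u (2 + i) t * (v (p + 1 - i) t / t))
        = (w i - w (Suc i)) / t"
      using t by (simp add: w_def field_simps)
  qed
  also have "\<dots> = (u 1 t * v (p + 2) t + (-1) ^ p * u (p + 2) t * v 1 t) / t"
    by (subst sum_telescope) (simp add: w_def)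
  finally show ?thesis using d by simp
qed



lemma alg:
  fixes L K3 K2 M3 M2 t :: real
  assumes t: "t \<noteq> 0" "1 + t \<noteq> 0"
  shows "(-1) ^ (m + 1) * (- (L ^ m / fact m * K3 / (1 + t)))
       + (-1) ^ (p + k + 1) * (- (L ^ k / fact k * M3 / (1 + t)))
       - ((-1) ^ m / fact (m + 1) * ((1 + real m) * (1 / (1 + t) * L ^ m) * K3 + L ^ (m + 1) * (K2 / t))
          + (-1) ^ (p + k) / fact (k + 1) * ((1 + real k) * (1 / (1 + t) * L ^ k) * M3 + L ^ (k + 1) * (M2 / t))
          + ((- L) ^ (m + 1) / fact (m + 1) * K2 + (-1) ^ p * M2 * ((- L) ^ (k + 1) / fact (k + 1))) / t) = 0"
proof -
  have E5: "(-1) ^ (m + 1) = - ((-1) ^ m :: real)" by (simp only: power_add power_one_right mult_minus1_right)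
  have E5': "(-1) ^ (k + 1) = - ((-1) ^ k :: real)" by (simp only: power_add power_one_right mult_minus1_right)
  have E3: "(- L) ^ (m + 1) = - ((-1) ^ m * L ^ (m + 1))" by (subst power_minus) (simp only: E5 mult_minus_left)
  have E4: "(- L) ^ (k + 1) = - ((-1) ^ k * L ^ (k + 1))" by (subst power_minus) (simp only: E5' mult_minus_left)
  have E6: "(-1) ^ (p + k + 1) = - ((-1) ^ p * (-1) ^ k :: real)"
    by (simp only: power_add power_one_right mult_minus1_right)
  have E7: "(-1) ^ (p + k) = ((-1) ^ p * (-1) ^ k :: real)" by (simp only: power_add)
  have L1: "L ^ (m + 1) = L ^ m * L" "L ^ (k + 1) = L ^ k * L" by (simp_all only: power_add power_one_right)
  define F where "F = 1 / (fact m :: real)"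
  define F1 where "F1 = 1 / (fact (m + 1) :: real)"
  define G where "G = 1 / (fact k :: real)"
  define G1 where "G1 = 1 / (fact (k + 1) :: real)"
  define u where "u = 1 / (1 + t)"
  define v where "v = 1 / t"
  have hF: "(1 + real m) * F1 = F"
  proof -
    have "fact (m + 1) = (1 + real m) * (fact m :: real)" by (simp add: fact_Suc)
    then show ?thesis unfolding F_def F1_def by (simp add: add_pos_nonneg)
  qed
  have hG: "(1 + real k) * G1 = G"
  proof -
    have "fact (k + 1) = (1 + real k) * (fact k :: real)" by (simp add: fact_Suc)
    then show ?thesis unfolding G_def G1_def by (simp add: add_pos_nonneg)
  qed
  have d: "\<And>x y :: real. x / y = x * (1 / y)" by simp
  have "(-1) ^ (m + 1) * (- (L ^ m / fact m * K3 / (1 + t)))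
       + (-1) ^ (p + k + 1) * (- (L ^ k / fact k * M3 / (1 + t)))
       - ((-1) ^ m / fact (m + 1) * ((1 + real m) * (1 / (1 + t) * L ^ m) * K3 + L ^ (m + 1) * (K2 / t))
          + (-1) ^ (p + k) / fact (k + 1) * ((1 + real k) * (1 / (1 + t) * L ^ k) * M3 + L ^ (k + 1) * (M2 / t))
          + ((- L) ^ (m + 1) / fact (m + 1) * K2 + (-1) ^ p * M2 * ((- L) ^ (k + 1) / fact (k + 1))) / t)
     = (- ((-1) ^ m)) * (- (L ^ m * F * K3 * u))
       + (- ((-1) ^ p * (-1) ^ k)) * (- (L ^ k * G * M3 * u))
       - ((-1) ^ m * F1 * ((1 + real m) * (u * L ^ m) * K3 + L ^ m * L * (K2 * v))
          + ((-1) ^ p * (-1) ^ k) * G1 * ((1 + real k) * (u * L ^ k) * M3 + L ^ k * L * (M2 * v))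
          + ((- ((-1) ^ m * (L ^ m * L))) * F1 * K2 + (-1) ^ p * M2 * ((- ((-1) ^ k * (L ^ k * L))) * G1)) * v)"
    unfolding E3 E4 E5 E6 E7 L1 F_def F1_def G_def G1_def u_def v_def
    by (simp only: times_divide_eq_right times_divide_eq_left divide_divide_eq_left mult_1_right mult_1_left)
  also have "\<dots> = 0"
    unfolding hF[symmetric] hG[symmetric] by (simp add: algebra_simps)
  finally show ?thesis .
qed



theorem theorem4p1:
  fixes m k p :: nat
  shows "(-1) ^ (m + 1) * (\<Sum>i = 0..m. ln 2 ^ i / fact i *
            mzv ([-1] @ replicate (m - i) 1 @ [int p + 3] @ replicate k 1))
       + (-1) ^ (p + k + 1) * (\<Sum>i = 0..k. ln 2 ^ i / fact i *
            mzv ([-1] @ replicate (k - i) 1 @ [int p + 3] @ replicate m 1))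
     = (-1) ^ m / fact (m + 1) * ln 2 ^ (m + 1) * mzv ([- (int p + 3)] @ replicate k 1)
       + (-1) ^ (p + k) / fact (k + 1) * ln 2 ^ (k + 1) * mzv ([- (int p + 3)] @ replicate m 1)
       + (\<Sum>i = 0..p. (-1) ^ i * mzv ([- (2 + int i)] @ replicate m 1)
                            * mzv ([- (int p + 2 - int i)] @ replicate k 1))"
proof -
  define A where "A j = pw 1 (replicate j 1 @ int (p + 3) # replicate k 1)" for j
  define B where "B j = pw 1 (replicate j 1 @ int (p + 3) # replicate m 1)" for j
  define M where "M s = pw s (replicate m 1)" for s
  define K where "K s = pw s (replicate k 1)" for s
  define HA where "HA x = (\<Sum>i = 0..m. ln (1 + x) ^ i / fact i * A (m - i) x)" for x
  define HB where "HB x = (\<Sum>i = 0..k. ln (1 + x) ^ i / fact i * B (k - i) x)" for x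
  define P where "P x = (\<Sum>i = 0..p. (-1) ^ i * M (2 + i) x * K (p + 2 - i) x)" for x
  define LK where "LK x = ln (1 + x) ^ (m + 1) * K (p + 3) x" for x
  define LM where "LM x = ln (1 + x) ^ (k + 1) * M (p + 3) x" for x
  define \<Phi> where "\<Phi> x = (-1) ^ (m + 1) * HA x + (-1) ^ (p + k + 1) * HB x
      - ((-1) ^ m / fact (m + 1) * LK x + (-1) ^ (p + k) / fact (k + 1) * LM x + P x)" for x
  have posA: "posl (replicate j 1 @ int (p + 3) # replicate k 1)" for j by (auto simp: posl_def)
  have posB: "posl (replicate j 1 @ int (p + 3) # replicate m 1)" for j by (auto simp: posl_def)
  have posm: "posl (replicate m 1)" and posk: "posl (replicate k 1)" by (auto simp: posl_def)
  have dPhi: "(\<Phi> has_field_derivative 0) (at t)" if t: "0 < t" "t < 1" for t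
  proof -
    have ta: "\<bar>t\<bar> < 1" using t by auto
    have dA: "(A (Suc j) has_field_derivative (- A j t / (1 + t))) (at t)" for j
      using deriv_A[of 1 "replicate j 1 @ int (p + 3) # replicate k 1" t] posA ta by (simp add: A_def)
    have dA0: "(A 0 has_field_derivative (- K (p + 3) t / (1 + t))) (at t)"
      using deriv_A[of "p + 3" "replicate k 1" t] posk ta by (simp add: A_def K_def)
    have dB: "(B (Suc j) has_field_derivative (- B j t / (1 + t))) (at t)" for j
      using deriv_A[of 1 "replicate j 1 @ int (p + 3) # replicate m 1" t] posB ta by (simp add: B_def)
    have dB0: "(B 0 has_field_derivative (- M (p + 3) t / (1 + t))) (at t)"
      using deriv_A[of "p + 3" "replicate m 1" t] posm ta by (simp add: B_def M_def)
    have dHA: "(HA has_field_derivative (- (ln (1 + t) ^ m / fact m * K (p + 3) t / (1 + t)))) (at t)"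
      unfolding HA_def[abs_def] by (rule tele_H[where a = A]) (use t dA dA0 in auto)
    have dHB: "(HB has_field_derivative (- (ln (1 + t) ^ k / fact k * M (p + 3) t / (1 + t)))) (at t)"
      unfolding HB_def[abs_def] by (rule tele_H[where a = B]) (use t dB dB0 in auto)
    have dM: "(M s has_field_derivative (M (s - 1) t / t)) (at t)" if "s \<ge> 2" for s
      unfolding M_def using deriv_M[OF that posm ta] t by simp
    have dK: "(K s has_field_derivative (K (s - 1) t / t)) (at t)" if "s \<ge> 2" for s
      unfolding K_def using deriv_M[OF that posk ta] t by simp
    have dP: "(P has_field_derivative ((M 1 t * K (p + 2) t + (-1) ^ p * M (p + 2) t * K 1 t) / t)) (at t)"
      unfolding P_def[abs_def] by (rule tele_P[where u = M and v = K]) (use t dM dK in auto)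
    have dl: "((\<lambda>x. ln (1 + x)) has_field_derivative (1 / (1 + t))) (at t)"
      using t by (auto intro!: derivative_eq_intros)
    have dLK: "(LK has_field_derivative ((1 + real m) * (1 / (1 + t) * ln (1 + t) ^ m) * K (p + 3) t
          + ln (1 + t) ^ (m + 1) * (K (p + 2) t / t))) (at t)"
    proof -
      have "(K (p + 3) has_field_derivative (K (p + 2) t / t)) (at t)" using dK[of "p + 3"] by simp
      from DERIV_mult[OF DERIV_power_Suc[OF dl, of m] this] show ?thesis
        unfolding LK_def[abs_def] by (simp add: mult_ac)
    qed
    have dLM: "(LM has_field_derivative ((1 + real k) * (1 / (1 + t) * ln (1 + t) ^ k) * M (p + 3) t
          + ln (1 + t) ^ (k + 1) * (M (p + 2) t / t))) (at t)"
    proof -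
      have "(M (p + 3) has_field_derivative (M (p + 2) t / t)) (at t)" using dM[of "p + 3"] by simp
      from DERIV_mult[OF DERIV_power_Suc[OF dl, of k] this] show ?thesis
        unfolding LM_def[abs_def] by (simp add: mult_ac)
    qed
    have M1: "M 1 t = (- ln (1 + t)) ^ (m + 1) / fact (m + 1)"
      unfolding M_def using pw_ones[of t m] t by simp
    have K1: "K 1 t = (- ln (1 + t)) ^ (k + 1) / fact (k + 1)"
      unfolding K_def using pw_ones[of t k] t by simp
    have D: "(\<Phi> has_field_derivative
        ((-1) ^ (m + 1) * (- (ln (1 + t) ^ m / fact m * K (p + 3) t / (1 + t)))
       + (-1) ^ (p + k + 1) * (- (ln (1 + t) ^ k / fact k * M (p + 3) t / (1 + t)))
       - ((-1) ^ m / fact (m + 1) * ((1 + real m) * (1 / (1 + t) * ln (1 + t) ^ m) * K (p + 3) t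
              + ln (1 + t) ^ (m + 1) * (K (p + 2) t / t))
          + (-1) ^ (p + k) / fact (k + 1) * ((1 + real k) * (1 / (1 + t) * ln (1 + t) ^ k) * M (p + 3) t
              + ln (1 + t) ^ (k + 1) * (M (p + 2) t / t))
          + (M 1 t * K (p + 2) t + (-1) ^ p * M (p + 2) t * K 1 t) / t))) (at t)"
      unfolding \<Phi>_def[abs_def]
      by (intro DERIV_diff DERIV_add DERIV_cmult dHA dHB dLK dLM dP)
    have "((-1) ^ (m + 1) * (- (ln (1 + t) ^ m / fact m * K (p + 3) t / (1 + t)))
       + (-1) ^ (p + k + 1) * (- (ln (1 + t) ^ k / fact k * M (p + 3) t / (1 + t)))
       - ((-1) ^ m / fact (m + 1) * ((1 + real m) * (1 / (1 + t) * ln (1 + t) ^ m) * K (p + 3) t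
              + ln (1 + t) ^ (m + 1) * (K (p + 2) t / t))
          + (-1) ^ (p + k) / fact (k + 1) * ((1 + real k) * (1 / (1 + t) * ln (1 + t) ^ k) * M (p + 3) t
              + ln (1 + t) ^ (k + 1) * (M (p + 2) t / t))
          + (M 1 t * K (p + 2) t + (-1) ^ p * M (p + 2) t * K 1 t) / t)) = 0"
      unfolding M1 K1 by (rule alg) (use t in auto)
    then show ?thesis using D by simp
  qed
  have cont: "continuous_on {0..t} \<Phi>" if t: "t < 1" for t
  proof -
    have pc: "continuous_on {0..t} (pw s ss)" if "posl ss" "s \<ge> 1" for s ss
      by (intro continuous_at_imp_continuous_on ballI pw_isCont that) (use t in auto)
    show ?thesis unfolding \<Phi>_def[abs_def] HA_def HB_def P_def LK_def LM_def A_def B_def M_def K_def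
      by (intro continuous_intros pc posA posB posm posk) auto
  qed
  have Phi0: "\<Phi> t = 0" if t: "0 < t" "t < 1" for t
  proof -
    have "\<Phi> t = \<Phi> 0"
      by (rule DERIV_isconst_end[OF t(1) cont[OF t(2)]]) (use dPhi t in auto)
    also have "\<Phi> 0 = 0"
      by (simp add: \<Phi>_def HA_def HB_def P_def LK_def LM_def A_def B_def M_def K_def)
    finally show ?thesis .
  qed
  have lA: "(A j \<longlongrightarrow> mzv ([-1] @ replicate j 1 @ [int p + 3] @ replicate k 1)) (at_left 1)" for j
    using pw_tendsto[OF posA[of j], of 1] by (simp add: A_def)
  have lB: "(B j \<longlongrightarrow> mzv ([-1] @ replicate j 1 @ [int p + 3] @ replicate m 1)) (at_left 1)" for j
    using pw_tendsto[OF posB[of j], of 1] by (simp add: B_def)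
  have lM: "(M s \<longlongrightarrow> mzv ([- int s] @ replicate m 1)) (at_left 1)" if "s \<ge> 1" for s
    using pw_tendsto[OF posm that] by (simp add: M_def)
  have lK: "(K s \<longlongrightarrow> mzv ([- int s] @ replicate k 1)) (at_left 1)" if "s \<ge> 1" for s
    using pw_tendsto[OF posk that] by (simp add: K_def)
  have ll: "((\<lambda>x. ln (1 + x)) \<longlongrightarrow> ln 2) (at_left (1::real))"
  proof -
    have "((\<lambda>x::real. 1 + x) \<longlongrightarrow> 1 + 1) (at_left 1)" by (intro tendsto_intros)
    then show ?thesis by (intro tendsto_ln) auto
  qed
  have lim: "(\<Phi> \<longlongrightarrow>
      (-1) ^ (m + 1) * (\<Sum>i = 0..m. ln 2 ^ i / fact i * mzv ([-1] @ replicate (m - i) 1 @ [int p + 3] @ replicate k 1))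
    + (-1) ^ (p + k + 1) * (\<Sum>i = 0..k. ln 2 ^ i / fact i * mzv ([-1] @ replicate (k - i) 1 @ [int p + 3] @ replicate m 1))
    - ((-1) ^ m / fact (m + 1) * (ln 2 ^ (m + 1) * mzv ([- int (p + 3)] @ replicate k 1))
       + (-1) ^ (p + k) / fact (k + 1) * (ln 2 ^ (k + 1) * mzv ([- int (p + 3)] @ replicate m 1))
       + (\<Sum>i = 0..p. (-1) ^ i * mzv ([- int (2 + i)] @ replicate m 1) * mzv ([- int (p + 2 - i)] @ replicate k 1))))
      (at_left 1)"
    unfolding \<Phi>_def[abs_def] HA_def HB_def P_def LK_def LM_def
    by (intro tendsto_intros lA lB lM lK ll) auto
  moreover have "(\<Phi> \<longlongrightarrow> 0) (at_left 1)"
  proof -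
    have "eventually (\<lambda>x. x \<in> {0<..<1}) (at_left (1::real))" by (rule eventually_at_left_real) simp
    then have "eventually (\<lambda>x. \<Phi> x = 0) (at_left (1::real))" by eventually_elim (auto intro: Phi0)
    then show ?thesis by (rule tendsto_eventually)
  qed
  ultimately have Z: "(-1) ^ (m + 1) * (\<Sum>i = 0..m. ln 2 ^ i / fact i * mzv ([-1] @ replicate (m - i) 1 @ [int p + 3] @ replicate k 1))
    + (-1) ^ (p + k + 1) * (\<Sum>i = 0..k. ln 2 ^ i / fact i * mzv ([-1] @ replicate (k - i) 1 @ [int p + 3] @ replicate m 1))
    - ((-1) ^ m / fact (m + 1) * (ln 2 ^ (m + 1) * mzv ([- int (p + 3)] @ replicate k 1))
       + (-1) ^ (p + k) / fact (k + 1) * (ln 2 ^ (k + 1) * mzv ([- int (p + 3)] @ replicate m 1))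
       + (\<Sum>i = 0..p. (-1) ^ i * mzv ([- int (2 + i)] @ replicate m 1) * mzv ([- int (p + 2 - i)] @ replicate k 1))) = 0"
    using tendsto_unique[OF trivial_limit_at_left_real] by blast
  have S: "(\<Sum>i = 0..p. (-1) ^ i * mzv ([- int (2 + i)] @ replicate m 1) * mzv ([- int (p + 2 - i)] @ replicate k 1))
     = (\<Sum>i = 0..p. (-1) ^ i * mzv ([- (2 + int i)] @ replicate m 1) * mzv ([- (int p + 2 - int i)] @ replicate k 1))"
  proof (intro sum.cong refl)
    fix i assume i: "i \<in> {0..p}"
    have e1: "- int (2 + i) = - (2 + int i)" by simp
    have e2: "- int (p + 2 - i) = - (int p + 2 - int i)" using i by (simp add: of_nat_diff)
    show "(-1) ^ i * mzv ([- int (2 + i)] @ replicate m 1) * mzv ([- int (p + 2 - i)] @ replicate k 1)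
      = (-1) ^ i * mzv ([- (2 + int i)] @ replicate m 1) * mzv ([- (int p + 2 - int i)] @ replicate k 1)"
      by (simp only: e1 e2)
  qed
  have I: "int (p + 3) = int p + 3" by simp
  show ?thesis using Z unfolding S I by (simp add: algebra_simps)
qed


end
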